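(* Let $\mu>0$, $\sigma\ge0$ and $r=\sigma/\mu$. Then the robust approximation ratio for selling a single item satisfies \[\mathrm{APX}(\mu,\sigma)=\inf_{A}\sup_{F\in\mathbb{F}_{\mu,\sigma}}\frac{\mathrm{OPT}(F)}{\mathrm{REV}(A;F)}\ \ge\ 1+\ln(1+r^2),\] where the infimum is over all probability distributions $A$ over nonnegative prices.
   Context: A nonnegative real random variable is $(\mu,\sigma)$-distributed if its expectation is $\mu$ and its standard deviation is at most $\sigma$; $\mathbb{F}_{\mu,\sigma}$ is the class of such distributions. Single item, single buyer with value $X\sim F$. A (possibly randomized) truthful mechanism is identified with a probability distribution $A$ over prices $p\ge0$: a price $p\sim A$ is drawn and the buyer buys iff $X\ge p$. $\mathrm{REV}(p;F)=p\Pr[X\ge p]$, $\mathrm{REV}(A;F)=\mathbb{E}_{p\sim A}[\mathrm{REV}(p;F)]$, $\mathrm{OPT}(F)=\sup_{p\ge0}\mathrm{REV}(p;F)$ (the optimal revenue over all truthful mechanisms). Ratios with zero denominator are interpreted as $+\infty$. *)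

theory Defs
  imports "HOL-Probability.Probability"
begin

definition mu_sigma_dist :: "real \<Rightarrow> real \<Rightarrow> real measure \<Rightarrow> bool" where
  "mu_sigma_dist \<mu> \<sigma> F \<longleftrightarrow>
     prob_space F \<and> sets F = sets borel \<and> (AE x in F. 0 \<le> x) \<and>
     integrable F (\<lambda>x. x) \<and> integrable F (\<lambda>x. x\<^sup>2) \<and>
     (\<integral>x. x \<partial>F) = \<mu> \<and> (\<integral>x. (x - \<mu>)\<^sup>2 \<partial>F) \<le> \<sigma>\<^sup>2"

definition mechanism :: "real measure \<Rightarrow> bool" where
  "mechanism A \<longleftrightarrow> prob_space A \<and> sets A = sets borel \<and> (AE p in A. 0 \<le> p)"

definition REV_price :: "real \<Rightarrow> real measure \<Rightarrow> real" where
  "REV_price p F = p * measure F {p..}"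

definition REV_mech :: "real measure \<Rightarrow> real measure \<Rightarrow> real" where
  "REV_mech A F = (\<integral>p. REV_price p F \<partial>A)"

definition OPT :: "real measure \<Rightarrow> ereal" where
  "OPT F = (SUP p\<in>{0..}. ereal (REV_price p F))"

definition ratio :: "ereal \<Rightarrow> ereal \<Rightarrow> ereal" where
  "ratio a b = (if b = 0 then \<infinity> else a / b)"

definition APX :: "real \<Rightarrow> real \<Rightarrow> ereal" where
  "APX \<mu> \<sigma> = (INF A\<in>{A. mechanism A}. SUP F\<in>{F. mu_sigma_dist \<mu> \<sigma> F}.
                  ratio (OPT F) (ereal (REV_mech A F)))"

end

theory Submission
  imports Defs
begin

definition tp :: "real \<Rightarrow> real \<Rightarrow> real measure" where
  "tp q t = distr (measure_pmf (bernoulli_pmf q)) borel (\<lambda>b. if b then t else 0)"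

lemma tp_sets[simp]: "sets (tp q t) = sets borel" by (simp add: tp_def)

lemma tp_prob: "prob_space (tp q t)"
  unfolding tp_def by (rule measure_pmf.prob_space_distr) simp

lemma tp_integral:
  assumes "0 \<le> q" "q \<le> 1" and g: "g \<in> borel_measurable borel"
  shows "(\<integral>x. g x \<partial>tp q t) = q * g t + (1 - q) * g 0"
proof -
  have "(\<integral>x. g x \<partial>tp q t) = (\<integral>b. g (if b then t else 0) \<partial>measure_pmf (bernoulli_pmf q))"
    unfolding tp_def by (rule integral_distr) (auto simp: g)
  also have "\<dots> = (\<Sum>b\<in>UNIV. pmf (bernoulli_pmf q) b *\<^sub>R g (if b then t else 0))"
    by (rule integral_measure_pmf) auto
  also have "\<dots> = q * g t + (1 - q) * g 0" using assms by (simp add: UNIV_bool)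
  finally show ?thesis .
qed

lemma tp_integrable: "g \<in> borel_measurable borel \<Longrightarrow> integrable (tp q t) (g::real\<Rightarrow>real)"
  by (simp add: tp_def integrable_distr_eq integrable_measure_pmf_finite)

lemma tp_AE: "AE x in tp q t. x \<in> {0, t}"
  unfolding tp_def by (subst AE_distr_iff) (auto simp: AE_measure_pmf_iff)

lemma tp_measure:
  assumes "0 \<le> q" "q \<le> 1"
  shows "measure (tp q t) {p..} = (if p \<le> t then q else 0) + (if p \<le> 0 then 1 - q else 0)"
proof -
  have "measure (tp q t) {p..} = measure (measure_pmf (bernoulli_pmf q)) ((\<lambda>b. if b then t else 0) -` {p..})"
    unfolding tp_def by (subst measure_distr) auto
  also have "\<dots> = (\<Sum>b\<in>(\<lambda>b. if b then t else 0) -` {p..}. pmf (bernoulli_pmf q) b)"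
    by (rule measure_measure_pmf_finite) simp
  also have "\<dots> = (if p \<le> t then q else 0) + (if p \<le> 0 then 1 - q else 0)"
  proof -
    have "(\<lambda>b. if b then t else 0) -` {p..} = (if p \<le> t then {True} else {}) \<union> (if p \<le> 0 then {False} else {})"
      by (auto split: if_splits)
    then show ?thesis using assms by auto
  qed
  finally show ?thesis .
qed

lemma tp_dist:
  assumes mu: "\<mu> > 0" and t1: "\<mu> \<le> t" and t2: "t \<le> \<mu> * (1 + (\<sigma>/\<mu>)\<^sup>2)"
  shows "mu_sigma_dist \<mu> \<sigma> (tp (\<mu>/t) t)"
proof -
  have tpos: "t > 0" using mu t1 by linarith
  have q0: "0 \<le> \<mu>/t" and q1: "\<mu>/t \<le> 1" using mu tpos t1 by auto
  have ae: "AE x in tp (\<mu>/t) t. 0 \<le> x"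
    using tp_AE[where q="\<mu>/t" and t=t] by eventually_elim (use tpos in auto)
  have i1: "(\<integral>x. x \<partial>tp (\<mu>/t) t) = \<mu>"
    using tp_integral[OF q0 q1, of "\<lambda>x. x"] tpos by simp
  have "(\<integral>x. (x - \<mu>)\<^sup>2 \<partial>tp (\<mu>/t) t) = \<mu>/t * (t - \<mu>)\<^sup>2 + (1 - \<mu>/t) * (0 - \<mu>)\<^sup>2"
    using tp_integral[OF q0 q1, of "\<lambda>x. (x - \<mu>)\<^sup>2"] by simp
  also have "\<dots> = \<mu> * t - \<mu>\<^sup>2" using tpos by (simp add: field_simps power2_eq_square)
  also have "\<dots> \<le> \<sigma>\<^sup>2"
  proof -
    have "\<mu> * t \<le> \<mu> * (\<mu> * (1 + (\<sigma>/\<mu>)\<^sup>2))" using t2 mu by (intro mult_left_mono) auto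
    also have "\<dots> = \<mu>\<^sup>2 + \<sigma>\<^sup>2" using mu by (simp add: field_simps power2_eq_square)
    finally show ?thesis by simp
  qed
  finally show ?thesis
    unfolding mu_sigma_dist_def
  proof (intro conjI)
    show "prob_space (tp (\<mu> / t) t)" by (rule tp_prob)
    show "integrable (tp (\<mu> / t) t) (\<lambda>x. x)" by (rule tp_integrable) simp
    show "integrable (tp (\<mu> / t) t) (\<lambda>x. x\<^sup>2)" by (rule tp_integrable) simp
  qed (use ae i1 in auto)
qed

lemma tp_OPT:
  assumes mu: "\<mu> > 0" and t1: "\<mu> \<le> t"
  shows "OPT (tp (\<mu>/t) t) \<ge> ereal \<mu>"
proof -
  have tpos: "t > 0" using mu t1 by linarith
  have q0: "0 \<le> \<mu>/t" and q1: "\<mu>/t \<le> 1" using mu tpos t1 by auto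
  have "REV_price t (tp (\<mu>/t) t) = \<mu>"
    unfolding REV_price_def tp_measure[OF q0 q1] using tpos by simp
  then have "ereal \<mu> = ereal (REV_price t (tp (\<mu>/t) t))" by simp
  also have "\<dots> \<le> OPT (tp (\<mu>/t) t)" unfolding OPT_def
    by (rule SUP_upper) (use tpos in auto)
  finally show ?thesis .
qed

definition hh :: "real \<Rightarrow> real \<Rightarrow> real" where
  "hh t p = (if 0 \<le> p \<and> p \<le> t then p else 0)"

lemma hh_meas[measurable]: "hh t \<in> borel_measurable borel"
  unfolding hh_def by measurable

lemma mech_meas:
  assumes "mechanism A" "f \<in> borel_measurable borel"
  shows "f \<in> borel_measurable A"
proof -
  have s: "sets A = sets borel" using assms unfolding mechanism_def by simp
  show ?thesis using assms(2) measurable_cong_sets[OF s refl] by metis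
qed

lemma hh_integrable:
  assumes "mechanism A" "t \<ge> 0"
  shows "integrable A (hh t)"
proof -
  interpret prob_space A using assms unfolding mechanism_def by simp
  show ?thesis
  proof (rule integrable_const_bound[where B=t])
    show "AE x in A. norm (hh t x) \<le> t" using assms(2) by (intro AE_I2) (simp add: hh_def)
    show "hh t \<in> borel_measurable A" by (rule mech_meas[OF assms(1) hh_meas])
  qed
qed

lemma tp_REV:
  assumes A: "mechanism A" and q0: "0 \<le> q" and q1: "q \<le> 1" and tpos: "t > 0"
  shows "REV_mech A (tp q t) = q * (\<integral>p. hh t p \<partial>A)"
proof -
  have "REV_mech A (tp q t) = (\<integral>p. p * ((if p \<le> t then q else 0) + (if p \<le> 0 then 1 - q else 0)) \<partial>A)"
    unfolding REV_mech_def REV_price_def tp_measure[OF q0 q1] ..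
  also have "\<dots> = (\<integral>p. q * hh t p \<partial>A)"
  proof (rule integral_cong_AE)
    show "(\<lambda>p. p * ((if p \<le> t then q else 0) + (if p \<le> 0 then 1 - q else 0))) \<in> borel_measurable A"
      by (rule mech_meas[OF A]) measurable
    show "(\<lambda>p. q * hh t p) \<in> borel_measurable A"
      by (rule mech_meas[OF A]) measurable
    have "AE p in A. 0 \<le> p" using A unfolding mechanism_def by simp
    then show "AE p in A. p * ((if p \<le> t then q else 0) + (if p \<le> 0 then 1 - q else 0)) = q * hh t p"
    proof (eventually_elim)
      case (elim p)
      show ?case
      proof (cases "p \<le> t")
        case True
        then show ?thesis using elim by (cases "p = 0") (auto simp: hh_def)
      next
        case False
        then show ?thesis using elim tpos by (simp add: hh_def)
      qed
    qed
  qed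
  also have "\<dots> = q * (\<integral>p. hh t p \<partial>A)" by simp
  finally show ?thesis .
qed

lemma sum_bound:
  fixes t :: "nat \<Rightarrow> real"
  assumes tp: "\<And>j. 0 < t j" and tm: "\<And>j. t j \<le> t (Suc j)" and p: "0 \<le> p"
  and w: "\<And>j. w j = (if j < n then 1 / t j - 1 / t (Suc j) else 1 / t n)"
  shows "m \<le> n \<Longrightarrow> (\<Sum>j=m..n. w j * (if p \<le> t j then 1 else 0)) \<le> 1 / t m
     \<and> p * (\<Sum>j=m..n. w j * (if p \<le> t j then 1 else 0)) \<le> 1"
proof (induction m rule: inc_induct)
  case base
  then show ?case using tp[of n] p by (auto simp: w field_simps)
next
  case (step m)
  have wm: "w m = 1 / t m - 1 / t (Suc m)" using step by (simp add: w)
  have wm0: "0 \<le> w m" unfolding wm using tp[of m] tm[of m] by (simp add: frac_le)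
  have split: "(\<Sum>j=m..n. w j * (if p \<le> t j then 1 else 0))
     = w m * (if p \<le> t m then 1 else 0) + (\<Sum>j=Suc m..n. w j * (if p \<le> t j then 1 else 0))"
    using step by (simp add: sum.atLeast_Suc_atMost)
  define R where "R = (\<Sum>j=Suc m..n. w j * (if p \<le> t j then 1 else 0))"
  have IH: "R \<le> 1 / t (Suc m)" "p * R \<le> 1" using step.IH unfolding R_def by auto
  have inv: "1 / t (Suc m) \<le> 1 / t m" using tp[of m] tm[of m] by (simp add: frac_le)
  show ?case
  proof (cases "p \<le> t m")
    case True
    have a: "w m + R \<le> 1 / t m" using IH wm by simp
    have b: "p * (w m + R) \<le> 1"
    proof (cases "w m + R \<ge> 0")
      case True
      have "p * (w m + R) \<le> t m * (w m + R)" using \<open>p \<le> t m\<close> True by (rule mult_right_mono)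
      also have "\<dots> \<le> t m * (1 / t m)" using a tp[of m] by (intro mult_left_mono) auto
      also have "\<dots> = 1" using tp[of m] by simp
      finally show ?thesis .
    next
      case False
      then have "p * (w m + R) \<le> 0" using p by (simp add: mult_nonneg_nonpos)
      then show ?thesis by simp
    qed
    have e: "(\<Sum>j=m..n. w j * (if p \<le> t j then 1 else 0)) = w m + R"
      using True unfolding split R_def by simp
    show ?thesis unfolding e using a b by blast
  next
    case False
    have e: "(\<Sum>j=m..n. w j * (if p \<le> t j then 1 else 0)) = R"
      using False unfolding split R_def by simp
    show ?thesis unfolding e using IH inv by linarith
  qed
qed


lemma ratio_ge:
  assumes a: "a \<ge> ereal \<mu>" and mu: "\<mu> > 0" and R: "R \<ge> 0" and RS: "R * S \<le> \<mu>" and S: "S > 0"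
  shows "ratio a (ereal R) \<ge> ereal S"
proof (cases "R = 0")
  case True then show ?thesis by (simp add: ratio_def)
next
  case False
  then have Rp: "R > 0" using R by simp
  have "ereal S \<le> ereal (\<mu> / R)" using RS Rp by (simp add: pos_le_divide_eq mult.commute)
  also have "\<dots> = ereal \<mu> / ereal R" using Rp by simp
  also have "\<dots> \<le> a / ereal R" using a Rp by (intro ereal_divide_right_mono) auto
  also have "\<dots> = ratio a (ereal R)" using Rp by (simp add: ratio_def)
  finally show ?thesis .
qed

lemma mech_bound:
  assumes mu: "\<mu> > 0" and A: "mechanism A" and n: "n \<ge> 1" and L: "L = ln (1 + (\<sigma>/\<mu>)\<^sup>2)"
  shows "(SUP F\<in>{F. mu_sigma_dist \<mu> \<sigma> F}. ratio (OPT F) (ereal (REV_mech A F)))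
           \<ge> ereal (1 + real n * (1 - exp (- L / real n)))"
proof -
  interpret prob_space A using A unfolding mechanism_def by simp
  have L0: "L \<ge> 0" unfolding L by simp
  have np: "real n > 0" using n by simp
  define t where "t j = \<mu> * exp (real j * L / real n)" for j
  define w where "w j = (if j < n then 1 / t j - 1 / t (Suc j) else 1 / t n)" for j
  define G where "G j = (\<integral>p. hh (t j) p \<partial>A)" for j
  define S where "S = 1 + real n * (1 - exp (- L / real n))"
  have tpos: "\<And>j. 0 < t j" unfolding t_def using mu by simp
  have tSuc: "\<And>j. t (Suc j) = t j * exp (L / real n)"
    unfolding t_def by (simp add: exp_add[symmetric] distrib_right add_divide_distrib)
  have tmono: "t j \<le> t (Suc j)" for j
  proof -
    have "1 \<le> exp (L / real n)" using L0 np by simp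
    then have "t j * 1 \<le> t j * exp (L / real n)" using tpos[of j] by (intro mult_left_mono) auto
    then show ?thesis unfolding tSuc by simp
  qed
  have w0: "0 \<le> w j" for j unfolding w_def using tpos[of j] tpos[of "Suc j"] tpos[of n] tmono[of j] by (simp add: frac_le)
  have wn: "0 < w n" unfolding w_def using tpos[of n] by simp
  have G0: "\<And>j. 0 \<le> G j" unfolding G_def by (rule integral_nonneg_AE) (simp add: hh_def)
  have point: "(\<Sum>j=0..n. w j * hh (t j) p) \<le> 1" for p
  proof (cases "0 \<le> p")
    case True
    have "(\<Sum>j=0..n. w j * hh (t j) p) = p * (\<Sum>j=0..n. w j * (if p \<le> t j then 1 else 0))"
      unfolding sum_distrib_left using True by (intro sum.cong) (auto simp: hh_def)
    also have "\<dots> \<le> 1" using sum_bound[where t=t and w=w and n=n and m=0 and p=p, OF tpos tmono True w_def] by simp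
    finally show ?thesis .
  next
    case False then show ?thesis by (simp add: hh_def)
  qed
  have sumG: "(\<Sum>j=0..n. w j * G j) \<le> 1"
  proof -
    have int: "\<And>j. integrable A (hh (t j))" using hh_integrable[OF A] tpos less_imp_le by blast
    have "(\<Sum>j=0..n. w j * G j) = (\<integral>p. (\<Sum>j=0..n. w j * hh (t j) p) \<partial>A)"
      unfolding G_def using Bochner_Integration.integral_sum[where I="{0..n}" and M=A and f="\<lambda>j p. w j * hh (t j) p"] int by simp
    also have "\<dots> \<le> 1"
    proof (rule integral_le_const)
      show "integrable A (\<lambda>x. \<Sum>j = 0..n. w j * hh (t j) x)"
        by (intro Bochner_Integration.integrable_sum integrable_mult_right int)
    qed (intro AE_I2 point)
    finally show ?thesis .
  qed
  have sumS: "(\<Sum>j=0..n. w j * t j) = S"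
  proof -
    have "w j * t j = 1 - exp (- L / real n)" if "j < n" for j
      unfolding w_def using tpos[of j] that by (simp add: tSuc field_simps exp_minus)
    then have "(\<Sum>j<n. w j * t j) = real n * (1 - exp (- L / real n))" by simp
    moreover have "w n * t n = 1" unfolding w_def using tpos[of n] by simp
    moreover have "{0..n} = insert n {..<n}" by auto
    ultimately show ?thesis unfolding S_def by simp
  qed
  have Spos: "S > 0"
  proof -
    have "exp (- L / real n) \<le> 1" using L0 np by simp
    then have "0 \<le> real n * (1 - exp (- L / real n))" using np by simp
    then show ?thesis unfolding S_def by linarith
  qed
  have "\<exists>j\<le>n. G j * S \<le> t j"
  proof (rule ccontr)
    assume "\<not> ?thesis"
    then have gt: "\<And>j. j \<le> n \<Longrightarrow> t j < G j * S" by force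
    have "{0..n} = insert n {..<n}" by auto
    then have e1: "(\<Sum>j=0..n. w j * t j) = w n * t n + (\<Sum>j<n. w j * t j)"
      and e2: "(\<Sum>j=0..n. w j * (G j * S)) = w n * (G n * S) + (\<Sum>j<n. w j * (G j * S))"
      by simp_all
    have "(\<Sum>j<n. w j * t j) \<le> (\<Sum>j<n. w j * (G j * S))"
      using gt w0 by (intro sum_mono mult_left_mono) (auto intro: less_imp_le)
    moreover have "w n * t n < w n * (G n * S)" using gt[of n] wn by simp
    ultimately have "S < (\<Sum>j=0..n. w j * (G j * S))"
      using sumS e1 e2 by linarith
    also have "\<dots> = S * (\<Sum>j=0..n. w j * G j)" by (simp add: sum_distrib_left mult_ac)
    also have "\<dots> \<le> S * 1" using sumG Spos by (intro mult_left_mono) auto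
    finally show False by simp
  qed
  then obtain j where j: "j \<le> n" "G j * S \<le> t j" by blast
  have tj1: "\<mu> \<le> t j" unfolding t_def using mu L0 np by simp
  have tj2: "t j \<le> \<mu> * (1 + (\<sigma>/\<mu>)\<^sup>2)"
  proof -
    have "real j * L \<le> real n * L" using j(1) L0 by (intro mult_right_mono) auto
    then have "real j * L / real n \<le> L" using np by (simp add: divide_le_eq mult.commute)
    then have "exp (real j * L / real n) \<le> exp L" by simp
    also have "exp L = 1 + (\<sigma>/\<mu>)\<^sup>2" unfolding L by (simp add: add_pos_nonneg)
    finally show ?thesis unfolding t_def using mu by simp
  qed
  define F where "F = tp (\<mu> / t j) (t j)"
  have Fd: "F \<in> {F. mu_sigma_dist \<mu> \<sigma> F}" unfolding F_def using tp_dist[OF mu tj1 tj2] by simp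
  have REV: "REV_mech A F = \<mu> / t j * G j" unfolding F_def G_def
    by (rule tp_REV[OF A]) (use mu tpos[of j] tj1 in auto)
  have "ereal S \<le> ratio (OPT F) (ereal (REV_mech A F))"
  proof (rule ratio_ge[OF _ mu])
    show "ereal \<mu> \<le> OPT F" unfolding F_def by (rule tp_OPT[OF mu tj1])
    show "0 \<le> REV_mech A F" unfolding REV using mu tpos[of j] G0[of j] by simp
    show "REV_mech A F * S \<le> \<mu>"
    proof -
      have "REV_mech A F * S = \<mu> / t j * (G j * S)" unfolding REV by simp
      also have "\<dots> \<le> \<mu> / t j * t j" using j(2) mu tpos[of j] by (intro mult_left_mono) auto
      also have "\<dots> = \<mu>" using tpos[of j] by simp
      finally show ?thesis .
    qed
  qed (rule Spos)
  also have "\<dots> \<le> (SUP F\<in>{F. mu_sigma_dist \<mu> \<sigma> F}. ratio (OPT F) (ereal (REV_mech A F)))"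
    by (rule SUP_upper[OF Fd])
  finally show ?thesis unfolding S_def .
qed


lemma S_lower:
  assumes L0: "L \<ge> 0" and n: "real n > 0"
  shows "1 + L - L\<^sup>2 / (real n + L) \<le> 1 + real n * (1 - exp (- L / real n))"
proof -
  define y where "y = L / real n"
  have y0: "y \<ge> 0" unfolding y_def using L0 n by simp
  have "exp (- y) = 1 / exp y" by (simp add: exp_minus field_simps)
  also have "\<dots> \<le> 1 / (1 + y)" using y0 by (intro divide_left_mono) auto
  finally have e: "exp (- y) \<le> 1 / (1 + y)" .
  have "L - L\<^sup>2 / (real n + L) = real n * (1 - 1 / (1 + y))"
    unfolding y_def using n L0 by (simp add: field_simps power2_eq_square)
  also have "\<dots> \<le> real n * (1 - exp (- y))" using e n by (intro mult_left_mono) auto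
  finally show ?thesis unfolding y_def by simp
qed

lemma limit_arg:
  assumes L0: "L \<ge> 0" and h: "\<And>n. n \<ge> 1 \<Longrightarrow> x \<ge> ereal (1 + real n * (1 - exp (- L / real n)))"
  shows "x \<ge> ereal (1 + L)"
proof (rule ccontr)
  assume "\<not> ?thesis"
  then have lt: "x < ereal (1 + L)" by simp
  have "x \<ge> ereal (1 + real (1::nat) * (1 - exp (- L / real (1::nat))))" by (rule h) simp
  then have "x \<noteq> -\<infinity>" by auto
  moreover have "x \<noteq> \<infinity>" using lt by auto
  ultimately obtain y where xy: "x = ereal y" by (cases x) auto
  have ylt: "y < 1 + L" using lt xy by simp
  define \<epsilon> where "\<epsilon> = 1 + L - y"
  have ep: "\<epsilon> > 0" unfolding \<epsilon>_def using ylt by simp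
  obtain N :: nat where N: "L\<^sup>2 / \<epsilon> < real N" using reals_Archimedean2 by blast
  define n where "n = Suc N"
  have n1: "n \<ge> 1" unfolding n_def by simp
  have np: "real n > 0" unfolding n_def by simp
  have "L\<^sup>2 / \<epsilon> < real n" using N unfolding n_def by simp
  then have "L\<^sup>2 < \<epsilon> * real n" using ep by (simp add: divide_less_eq mult.commute)
  also have "\<dots> \<le> \<epsilon> * (real n + L)" using ep L0 by simp
  finally have "L\<^sup>2 / (real n + L) < \<epsilon>" using np L0 by (simp add: divide_less_eq mult.commute)
  then have "y < 1 + L - L\<^sup>2 / (real n + L)" unfolding \<epsilon>_def by simp
  also have "\<dots> \<le> 1 + real n * (1 - exp (- L / real n))" by (rule S_lower[OF L0 np])
  finally have "ereal y < ereal (1 + real n * (1 - exp (- L / real n)))" by simp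
  also have "\<dots> \<le> x" by (rule h[OF n1])
  finally show False using xy by simp
qed

theorem theorem3:
  fixes \<mu> \<sigma> :: real
  assumes "\<mu> > 0" and "\<sigma> \<ge> 0"
  shows "APX \<mu> \<sigma> \<ge> ereal (1 + ln (1 + (\<sigma> / \<mu>)\<^sup>2))"
  unfolding APX_def
proof (rule INF_greatest)
  fix A assume "A \<in> {A. mechanism A}"
  then have A: "mechanism A" by simp
  show "ereal (1 + ln (1 + (\<sigma> / \<mu>)\<^sup>2)) \<le> (SUP F\<in>{F. mu_sigma_dist \<mu> \<sigma> F}. ratio (OPT F) (ereal (REV_mech A F)))"
  proof (rule limit_arg)
    show "0 \<le> ln (1 + (\<sigma> / \<mu>)\<^sup>2)" by simp
    fix n :: nat assume "n \<ge> 1"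
    then show "ereal (1 + real n * (1 - exp (- ln (1 + (\<sigma> / \<mu>)\<^sup>2) / real n)))
      \<le> (SUP F\<in>{F. mu_sigma_dist \<mu> \<sigma> F}. ratio (OPT F) (ereal (REV_mech A F)))"
      by (rule mech_bound[OF assms(1) A _ refl])
  qed
qed

end
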